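(* Fix integers $d\ge 1$ and $n\ge 1$. Then $$\sum_{\lambda\in\mathcal{H}_n} |\{i: 1\le i<\ell(\lambda),\ \lambda_i-\lambda_{i+1}<d\}| \;\ge\; \sum_{\lambda\in\mathcal{H}_n} |\{i: 1\le i\le \ell(\lambda),\ \lambda_i\not\equiv 1 \pmod{d+1}\}|.$$ That is, the total number of indices $i$ with $1\le i<\ell(\lambda)$ and $\lambda_i-\lambda_{i+1}<d$, over all $\lambda\in\mathcal{H}_n$, is at least the total number of parts not congruent to $1$ modulo $d+1$, over all $\lambda\in\mathcal{H}_n$.
   Context: A partition is a finite nonempty weakly decreasing sequence $\lambda=(\lambda_1,\ldots,\lambda_k)$ of positive integers; $\ell(\lambda)=k$ is its number of parts. The perimeter of $\lambda$ is $\Gamma(\lambda)=\lambda_1+\ell(\lambda)-1$, and $\mathcal{H}_n$ is the set of partitions with perimeter $n$. *)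

theory Defs
  imports Main
begin

text \<open>A partition is a finite nonempty weakly decreasing list of positive integers.
  Parts are lambda_1 = xs!0, ..., lambda_k = xs!(k-1).\<close>
definition is_partition :: "nat list \<Rightarrow> bool" where
  "is_partition xs \<longleftrightarrow> xs \<noteq> [] \<and> sorted_wrt (\<ge>) xs \<and> (\<forall>x\<in>set xs. x > 0)"

definition perimeter :: "nat list \<Rightarrow> nat" where
  "perimeter xs = hd xs + length xs - 1"

definition H :: "nat \<Rightarrow> nat list set" where
  "H n = {xs. is_partition xs \<and> perimeter xs = n}"

text \<open>Number of i with 1 <= i < l(lambda) and lambda_i - lambda_(i+1) < d (0-based here).\<close>
definition small_gaps :: "nat \<Rightarrow> nat list \<Rightarrow> nat" where
  "small_gaps d xs = card {i. i + 1 < length xs \<and> int (xs ! i) - int (xs ! (i+1)) < int d}"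

definition non_one_parts :: "nat \<Rightarrow> nat list \<Rightarrow> nat" where
  "non_one_parts d xs = card {i. i < length xs \<and> xs ! i mod (d + 1) \<noteq> 1 mod (d + 1)}"

end

theory Submission imports Defs begin

lemma part_Cons: "is_partition (a # ys) \<longleftrightarrow> a > 0 \<and> (\<forall>y\<in>set ys. y \<le> a) \<and> (ys = [] \<or> is_partition ys)"
  unfolding is_partition_def by auto

lemma H_Cons: "a # ys \<in> H n \<longleftrightarrow> is_partition (a#ys) \<and> a + length ys = n"
  by (simp add: H_def perimeter_def)

lemma Nil_notin_H: "[] \<notin> H n"
  by (simp add: H_def is_partition_def)

lemma finite_H: "finite (H n)"
proof -
  have "H n \<subseteq> {xs. set xs \<subseteq> {..n} \<and> length xs \<le> n}"
  proof
    fix xs assume xs: "xs \<in> H n"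
    then obtain a ys where e: "xs = a # ys" by (cases xs) (auto simp: Nil_notin_H)
    with xs show "xs \<in> {xs. set xs \<subseteq> {..n} \<and> length xs \<le> n}"
      by (auto simp: H_Cons part_Cons)
  qed
  then show ?thesis by (rule finite_subset) (rule finite_lists_length_le, simp)
qed

definition ext :: "nat \<Rightarrow> nat list \<Rightarrow> nat list" where
  "ext n ys = (n - length ys) # ys"

lemma H_decomp:
  assumes "n \<ge> 1"
  shows "H n = insert [n] (ext n ` (\<Union>m\<in>{1..<n}. H m))"
proof
  show "H n \<subseteq> insert [n] (ext n ` (\<Union>m\<in>{1..<n}. H m))"
  proof
    fix xs assume xs: "xs \<in> H n"
    then obtain a ys where e: "xs = a # ys" by (cases xs) (auto simp: Nil_notin_H)
    show "xs \<in> insert [n] (ext n ` (\<Union>m\<in>{1..<n}. H m))"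
    proof (cases ys)
      case Nil
      then show ?thesis using xs e by (simp add: H_Cons)
    next
      case (Cons b zs)
      have p: "is_partition (b # zs)" and ba: "b \<le> a" and b0: "b > 0" and n: "a + Suc (length zs) = n"
        using xs e Cons by (auto simp: H_Cons part_Cons)
      have "ys \<in> H (b + length zs)" using p Cons by (simp add: H_Cons)
      moreover have "b + length zs \<in> {1..<n}" using ba b0 n by auto
      moreover have "xs = ext n ys" using e Cons n by (simp add: ext_def)
      ultimately show ?thesis by blast
    qed
  qed
next
  show "insert [n] (ext n ` (\<Union>m\<in>{1..<n}. H m)) \<subseteq> H n"
  proof
    fix xs assume xs: "xs \<in> insert [n] (ext n ` (\<Union>m\<in>{1..<n}. H m))"
    show "xs \<in> H n"
    proof (cases "xs = [n]")
      case True then show ?thesis using assms by (simp add: H_Cons part_Cons)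
    next
      case False
      then obtain m ys where m: "m \<in> {1..<n}" and ys: "ys \<in> H m" and e: "xs = ext n ys" using xs by auto
      then obtain b zs where c: "ys = b # zs" by (cases ys) (auto simp: Nil_notin_H)
      have p: "is_partition (b # zs)" and bm: "b + length zs = m" using ys c by (auto simp: H_Cons)
      have "\<forall>y\<in>set zs. y \<le> b" "b > 0" using p by (auto simp: part_Cons)
      then show ?thesis using p bm m e c by (auto simp: ext_def H_Cons part_Cons)
    qed
  qed
qed

lemma sum_H:
  assumes "n \<ge> 1"
  shows "sum f (H n) = f [n] + (\<Sum>m\<in>{1..<n}. \<Sum>ys\<in>H m. f (ext n ys))"
proof -
  have inj: "inj (ext n)" by (rule injI) (simp add: ext_def)
  have notin: "[n] \<notin> ext n ` (\<Union>m\<in>{1..<n}. H m)"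
    by (auto simp: ext_def Nil_notin_H)
  have disj: "\<forall>i\<in>{1..<n}. \<forall>j\<in>{1..<n}. i \<noteq> j \<longrightarrow> H i \<inter> H j = {}"
    by (auto simp: H_def)
  have "sum f (H n) = f [n] + sum f (ext n ` (\<Union>m\<in>{1..<n}. H m))"
  proof -
    have fin: "finite (ext n ` (\<Union>m\<in>{1..<n}. H m))" by (simp add: finite_H)
    show ?thesis using assms notin fin by (subst H_decomp) (simp_all add: sum.insert)
  qed
  also have "sum f (ext n ` (\<Union>m\<in>{1..<n}. H m)) = sum (f \<circ> ext n) (\<Union>m\<in>{1..<n}. H m)"
    by (rule sum.reindex) (rule inj_on_subset[OF inj], simp)
  also have "\<dots> = (\<Sum>m\<in>{1..<n}. sum (f \<circ> ext n) (H m))"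
    by (rule sum.UNION_disjoint) (auto simp: finite_H disj)
  finally show ?thesis by simp
qed

lemma card_Suc_filter:
  "card {i. i < Suc k \<and> P i} = (if P 0 then 1 else 0) + card {i. i < k \<and> P (Suc i)}"
proof -
  have e: "{i. i < Suc k \<and> P i} = (if P 0 then {0} else {}) \<union> Suc ` {i. i < k \<and> P (Suc i)}"
    by (auto simp: less_Suc_eq_0_disj)
  have "card {i. i < Suc k \<and> P i} = card (if P 0 then {0::nat} else {}) + card (Suc ` {i. i < k \<and> P (Suc i)})"
    unfolding e by (rule card_Un_disjoint) auto
  then show ?thesis by (simp add: card_image)
qed

lemma small_gaps_Cons:
  "small_gaps d (a # ys) = (if ys \<noteq> [] \<and> int a - int (hd ys) < int d then 1 else 0) + small_gaps d ys"
proof -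
  have "small_gaps d (a # ys) = card {i. i < Suc (length ys) \<and> (i < length ys \<and> int ((a#ys) ! i) - int ((a#ys) ! (i+1)) < int d)}"
    unfolding small_gaps_def by (rule arg_cong[where f=card]) auto
  also have "\<dots> = (if ys \<noteq> [] \<and> int a - int (hd ys) < int d then 1 else 0) + small_gaps d ys"
    unfolding card_Suc_filter small_gaps_def
    by (cases ys) (auto intro!: arg_cong[where f=card])
  finally show ?thesis .
qed

lemma non_one_Cons:
  "non_one_parts d (a # ys) = (if a mod (d+1) \<noteq> 1 mod (d+1) then 1 else 0) + non_one_parts d ys"
  unfolding non_one_parts_def by (simp add: card_Suc_filter)

lemma small_gaps_Nil: "small_gaps d [] = 0" by (simp add: small_gaps_def)
lemma non_one_Nil: "non_one_parts d [] = 0" by (simp add: non_one_parts_def)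


lemma kk_mod: assumes "q > 0" shows "(b + (q + 1 - b mod q) mod q) mod q = 1 mod (q::nat)"
proof -
  have r: "b mod q < q" using assms by simp
  have "(b + (q + 1 - b mod q) mod q) mod q = (b mod q + (q + 1 - b mod q)) mod q"
    by (simp add: mod_add_left_eq mod_add_right_eq)
  also have "b mod q + (q + 1 - b mod q) = q + 1" using r by simp
  also have "(q+1) mod q = 1 mod q" by (rule mod_add_self1)
  finally show ?thesis .
qed

lemma card_H: "n \<ge> 1 \<Longrightarrow> card (H n) = 1 + (\<Sum>m\<in>{1..<n}. card (H m))"
  using sum_H[of n "\<lambda>_. 1::nat"] by simp

lemma L_rec:
  assumes "n \<ge> 1"
  shows "(\<Sum>xs\<in>H n. small_gaps d xs) = (\<Sum>m\<in>{1..<n}. if n < m+1+d then card (H m) else 0)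
     + (\<Sum>m\<in>{1..<n}. \<Sum>xs\<in>H m. small_gaps d xs)"
proof -
  have inner: "(\<Sum>ys\<in>H m. small_gaps d (ext n ys)) = (if n < m+1+d then card (H m) else 0) + (\<Sum>xs\<in>H m. small_gaps d xs)"
    if m: "m \<in> {1..<n}" for m
  proof -
    have "(\<Sum>ys\<in>H m. small_gaps d (ext n ys)) = (\<Sum>ys\<in>H m. (if n < m+1+d then 1 else 0) + small_gaps d ys)"
    proof (rule sum.cong[OF refl])
      fix ys assume ys: "ys \<in> H m"
      then obtain b zs where c: "ys = b # zs" by (cases ys) (auto simp: Nil_notin_H)
      have "b + length zs = m" using ys c by (simp add: H_Cons)
      then show "small_gaps d (ext n ys) = (if n < m+1+d then 1 else 0) + small_gaps d ys"
        using m c by (simp add: ext_def small_gaps_Cons)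
    qed
    also have "\<dots> = (if n < m+1+d then card (H m) else 0) + (\<Sum>xs\<in>H m. small_gaps d xs)"
      by (simp add: sum.distrib)
    finally show ?thesis .
  qed
  have "(\<Sum>xs\<in>H n. small_gaps d xs) = (\<Sum>m\<in>{1..<n}. (if n < m+1+d then card (H m) else 0) + (\<Sum>xs\<in>H m. small_gaps d xs))"
  proof -
    have "(\<Sum>m\<in>{1..<n}. \<Sum>ys\<in>H m. small_gaps d (ext n ys)) = (\<Sum>m\<in>{1..<n}. (if n < m+1+d then card (H m) else 0) + (\<Sum>xs\<in>H m. small_gaps d xs))"
      by (rule sum.cong[OF refl]) (rule inner)
    then show ?thesis by (simp add: sum_H[OF assms] small_gaps_Cons small_gaps_Nil)
  qed
  then show ?thesis by (simp add: sum.distrib)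
qed

lemma R_rec:
  assumes "n \<ge> 1"
  shows "(\<Sum>xs\<in>H n. non_one_parts d xs) = (\<Sum>xs\<in>H n. if hd xs mod (d+1) \<noteq> 1 mod (d+1) then 1 else 0)
     + (\<Sum>m\<in>{1..<n}. \<Sum>xs\<in>H m. non_one_parts d xs)"
proof -
  have "(\<Sum>xs\<in>H n. non_one_parts d xs) = (\<Sum>xs\<in>H n. (if hd xs mod (d+1) \<noteq> 1 mod (d+1) then 1 else 0) + non_one_parts d (tl xs))"
  proof (rule sum.cong[OF refl])
    fix xs assume "xs \<in> H n"
    then obtain b zs where c: "xs = b # zs" by (cases xs) (auto simp: Nil_notin_H)
    then show "non_one_parts d xs = (if hd xs mod (d+1) \<noteq> 1 mod (d+1) then 1 else 0) + non_one_parts d (tl xs)"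
      by (simp add: non_one_Cons)
  qed
  also have "\<dots> = (\<Sum>xs\<in>H n. if hd xs mod (d+1) \<noteq> 1 mod (d+1) then 1 else 0) + (\<Sum>xs\<in>H n. non_one_parts d (tl xs))"
    by (simp add: sum.distrib)
  also have "(\<Sum>xs\<in>H n. non_one_parts d (tl xs)) = (\<Sum>m\<in>{1..<n}. \<Sum>xs\<in>H m. non_one_parts d xs)"
    by (simp add: sum_H[OF assms] non_one_Nil ext_def)
  finally show ?thesis .
qed

lemma rep_part: "is_partition (replicate (Suc k) 1)"
  by (induct k) (auto simp: part_Cons)

lemma sorted_rep: "sorted_wrt (\<ge>) (replicate r (x::nat))"
  by (induct r) auto

lemma phi_part:
  assumes "is_partition ys"
  shows "is_partition (map (\<lambda>x. x + k) ys @ replicate r 1)"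
proof -
  have s: "sorted_wrt (\<ge>) ys" and p: "\<forall>x\<in>set ys. x > 0" and ne: "ys \<noteq> []"
    using assms by (auto simp: is_partition_def)
  have "sorted_wrt (\<ge>) (map (\<lambda>x. x + k) ys)"
    using s by (simp add: sorted_wrt_map)
  moreover have "sorted_wrt (\<ge>) (replicate r (1::nat))" by (rule sorted_rep)
  ultimately show ?thesis using p ne
    by (auto simp: is_partition_def sorted_wrt_append Suc_leI)
qed

lemma no_clash:
  assumes e: "map (\<lambda>x. x+k1) xs @ replicate r1 1 = map (\<lambda>x. x+k2) ys @ replicate r2 (1::nat)"
    and s: "k1 + r1 = k2 + r2" and lt: "k1 < k2" and ne: "ys \<noteq> []" and p: "\<forall>x\<in>set ys. x > 0"
  shows False
proof -
  have len: "length xs + r1 = length ys + r2" using arg_cong[OF e, of length] by simp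
  define j where "j = length ys - 1"
  have j1: "j < length ys" using ne by (simp add: j_def)
  have j2: "length xs \<le> j" "j - length xs < r1" using len s lt ne by (auto simp: j_def)
  have "(map (\<lambda>x. x+k1) xs @ replicate r1 1) ! j = 1" using j2 by (simp add: nth_append)
  moreover have "(map (\<lambda>x. x+k2) ys @ replicate r2 1) ! j = ys ! j + k2" using j1 by (simp add: nth_append)
  moreover have "ys ! j > 0" using p j1 nth_mem by blast
  ultimately show False using e lt by simp
qed


definition kk :: "nat \<Rightarrow> nat \<Rightarrow> nat" where
  "kk d b = (d + 1 + 1 - b mod (d+1)) mod (d+1)"

definition phi :: "nat \<Rightarrow> nat list \<Rightarrow> nat list" where
  "phi d ys = map (\<lambda>x. x + kk d (hd ys)) ys @ replicate (d - kk d (hd ys)) 1"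

lemma kk_le: "kk d b \<le> d"
  unfolding kk_def using mod_less_divisor[of "d+1" "d + 1 + 1 - b mod (d+1)"] by linarith

lemma phi_in:
  assumes ys: "ys \<in> H (n - d)" and nd: "d < n"
  shows "phi d ys \<in> {xs \<in> H n. hd xs mod (d+1) = 1 mod (d+1)}"
proof -
  obtain b zs where c: "ys = b # zs" using ys by (cases ys) (auto simp: Nil_notin_H)
  have p: "is_partition ys" and bz: "b + length zs = n - d" using ys c by (auto simp: H_def perimeter_def)
  define k where "k = kk d b"
  have kd: "k \<le> d" unfolding k_def by (rule kk_le)
  have e: "phi d ys = (b + k) # (map (\<lambda>x. x + k) zs @ replicate (d - k) 1)"
    by (simp add: phi_def c k_def)
  have "is_partition (phi d ys)" unfolding phi_def by (rule phi_part[OF p])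
  moreover have "perimeter (phi d ys) = n" unfolding e perimeter_def using kd bz nd by simp
  moreover have "hd (phi d ys) mod (d+1) = 1 mod (d+1)"
    unfolding e k_def kk_def using kk_mod[of "d+1" b] by simp
  ultimately show ?thesis unfolding H_def by blast
qed

lemma phi_inj: "inj_on (phi d) (H m)"
proof (rule inj_onI)
  fix xs ys assume xs: "xs \<in> H m" and ys: "ys \<in> H m" and e: "phi d xs = phi d ys"
  have px: "xs \<noteq> []" "\<forall>x\<in>set xs. x > 0" and py: "ys \<noteq> []" "\<forall>x\<in>set ys. x > 0"
    using xs ys by (auto simp: H_def is_partition_def)
  define k1 where "k1 = kk d (hd xs)"
  define k2 where "k2 = kk d (hd ys)"
  have e': "map (\<lambda>x. x + k1) xs @ replicate (d - k1) 1 = map (\<lambda>x. x + k2) ys @ replicate (d - k2) 1"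
    using e by (simp add: phi_def k1_def k2_def)
  have s: "k1 + (d - k1) = k2 + (d - k2)" using kk_le[of d] by (simp add: k1_def k2_def)
  consider "k1 < k2" | "k2 < k1" | "k1 = k2" by linarith
  then show "xs = ys"
  proof cases
    case 1 then show ?thesis using no_clash[OF e' s 1 py] by blast
  next
    case 2 then show ?thesis using no_clash[OF e'[symmetric] s[symmetric] 2 px] by blast
  next
    case 3
    then have "map (\<lambda>x. x + k1) xs = map (\<lambda>x. x + k1) ys" using e' by simp
    then show ?thesis by (rule map_injective) (simp add: inj_def)
  qed
qed

lemma key:
  assumes n: "n \<ge> 1" and d: "d \<ge> 1"
  shows "(\<Sum>xs\<in>H n. if hd xs mod (d+1) \<noteq> 1 mod (d+1) then 1 else 0) \<le> (\<Sum>m\<in>{1..<n}. if n < m+1+d then card (H m) else 0)"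
proof -
  define P where "P xs \<longleftrightarrow> hd xs mod (d+1) = 1 mod (d+1)" for xs
  define N1 where "N1 = card {xs\<in>H n. P xs}"
  define X where "X = (\<Sum>m\<in>{1..<n}. if n < m+1+d then card (H m) else 0)"
  define Z where "Z = (\<Sum>m\<in>{1..<n}. if \<not> n < m+1+d then card (H m) else 0)"
  define Bs where "Bs = (\<Sum>xs\<in>H n. if hd xs mod (d+1) \<noteq> 1 mod (d+1) then 1 else (0::nat))"
  have N1s: "N1 = (\<Sum>xs\<in>H n. if P xs then 1 else 0)"
    unfolding N1_def using sum.inter_filter[OF finite_H, of "\<lambda>_. 1::nat" n P] by simp
  have "Bs + N1 = (\<Sum>xs\<in>H n. (if \<not> P xs then 1 else 0) + (if P xs then 1 else 0))"
    unfolding N1s Bs_def P_def sum.distrib by simp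
  also have "\<dots> = (\<Sum>xs\<in>H n. (1::nat))" by (rule sum.cong) auto
  finally have B: "Bs + N1 = card (H n)" by simp
  have "(\<Sum>m\<in>{1..<n}. card (H m)) = X + Z"
    unfolding X_def Z_def sum.distrib[symmetric] by (rule sum.cong) auto
  then have C: "card (H n) = 1 + X + Z" using card_H[OF n] by simp
  have fin: "finite {xs\<in>H n. P xs}" using finite_H by simp
  have D: "1 + Z \<le> N1"
  proof (cases "n \<le> d")
    case True
    have Z0: "Z = 0" unfolding Z_def by (rule sum.neutral) (use True in auto)
    obtain k where k: "n = Suc k" using n by (cases n) auto
    have "replicate n 1 \<in> {xs\<in>H n. P xs}"
      using rep_part[of k] d by (simp add: k H_def perimeter_def P_def)
    then have "N1 > 0" unfolding N1_def using fin card_gt_0_iff by blast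
    then show ?thesis using Z0 by simp
  next
    case False
    have "Z = sum (\<lambda>m. card (H m)) {m\<in>{1..<n}. \<not> n < m+1+d}"
      unfolding Z_def by (rule sum.inter_filter[symmetric]) simp
    also have "{m\<in>{1..<n}. \<not> n < m+1+d} = {1..<n-d}" using False by auto
    finally have "1 + Z = card (H (n - d))" using card_H[of "n-d"] False by simp
    also have "\<dots> = card (phi d ` H (n - d))" by (rule card_image[symmetric, OF phi_inj])
    also have "\<dots> \<le> N1" unfolding N1_def P_def
      by (rule card_mono) (use fin phi_in False in \<open>auto simp: P_def\<close>)
    finally show ?thesis .
  qed
  show ?thesis using B C D unfolding Bs_def[symmetric] X_def[symmetric] by linarith
qed

theorem theorem1p4:
  fixes d n :: nat
  assumes "d \<ge> 1" and "n \<ge> 1"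
  shows "(\<Sum>xs\<in>H n. small_gaps d xs) \<ge> (\<Sum>xs\<in>H n. non_one_parts d xs)"
  using assms(2)
proof (induction n rule: less_induct)
  case (less n)
  have IH: "(\<Sum>m\<in>{1..<n}. \<Sum>xs\<in>H m. non_one_parts d xs) \<le> (\<Sum>m\<in>{1..<n}. \<Sum>xs\<in>H m. small_gaps d xs)"
    by (rule sum_mono) (use less.IH in auto)
  show ?case
    using L_rec[OF less.prems, of d] R_rec[OF less.prems, of d] key[OF less.prems assms(1)] IH
    by linarith
qed

end
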